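(* Let $A$ and $B$ be NFAs with at most $m$ and at most $n$ states, respectively, such that there is no infinite tower of prefixes between $L(A)$ and $L(B)$. Then every tower of prefixes between $L(A)$ and $L(B)$ has height at most $2^{m+n-1}$. Moreover, for infinitely many pairs $(m,n)$ there exist NFAs with $m$ and $n$ states, with no infinite tower of prefixes between their languages, admitting a tower of prefixes of height at least $2^{m+n-2}$.
   Context: A string $v$ is a prefix of $w$, written $v\le w$, if $w=vu$ for some string $u$. A sequence $(w_i)_{i=1}^r$ of strings is a tower of prefixes between languages $K$ and $L$ if $w_1\in K\cup L$ and for all $i=1,\dots,r-1$: $w_i\le w_{i+1}$, $w_i\in K$ implies $w_{i+1}\in L$, and $w_i\in L$ implies $w_{i+1}\in K$; $r$ is its height. An infinite tower of prefixes is an infinite sequence with the same properties. *)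

theory Defs
  imports Main "HOL-Library.Sublist"
begin

record ('q, 'a) nfa =
  states :: "'q set"
  alphabet :: "'a set"
  init :: "'q set"
  final :: "'q set"
  delta :: "'q \<Rightarrow> 'a \<Rightarrow> 'q set"

definition wf_nfa :: "('q, 'a) nfa \<Rightarrow> bool" where
  "wf_nfa A \<longleftrightarrow> finite (states A) \<and> finite (alphabet A)
     \<and> init A \<subseteq> states A \<and> final A \<subseteq> states A
     \<and> (\<forall>q\<in>states A. \<forall>a\<in>alphabet A. delta A q a \<subseteq> states A)"

fun deltas :: "('q, 'a) nfa \<Rightarrow> 'q \<Rightarrow> 'a list \<Rightarrow> 'q set" where
  "deltas A q [] = {q}"
| "deltas A q (a # w) = (\<Union>p\<in>delta A q a. deltas A p w)"

definition lang :: "('q, 'a) nfa \<Rightarrow> 'a list set" where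
  "lang A = {w. w \<in> lists (alphabet A) \<and> (\<exists>q\<in>init A. deltas A q w \<inter> final A \<noteq> {})}"

definition tower :: "'a list set \<Rightarrow> 'a list set \<Rightarrow> 'a list list \<Rightarrow> bool" where
  "tower K L ws \<longleftrightarrow> ws \<noteq> [] \<and> ws ! 0 \<in> K \<union> L \<and>
     (\<forall>i. Suc i < length ws \<longrightarrow>
        prefix (ws ! i) (ws ! Suc i) \<and>
        (ws ! i \<in> K \<longrightarrow> ws ! Suc i \<in> L) \<and>
        (ws ! i \<in> L \<longrightarrow> ws ! Suc i \<in> K))"

definition infinite_tower :: "'a list set \<Rightarrow> 'a list set \<Rightarrow> (nat \<Rightarrow> 'a list) \<Rightarrow> bool" where
  "infinite_tower K L w \<longleftrightarrow> w 0 \<in> K \<union> L \<and>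
     (\<forall>i. prefix (w i) (w (Suc i)) \<and>
        (w i \<in> K \<longrightarrow> w (Suc i) \<in> L) \<and>
        (w i \<in> L \<longrightarrow> w (Suc i) \<in> K))"

end

theory Submission
  imports Defs
begin


definition Dl :: "('q,'a) nfa \<Rightarrow> 'q set \<Rightarrow> 'a list \<Rightarrow> 'q set" where
  "Dl A X w = (\<Union>q\<in>X. deltas A q w)"

lemma deltas_append: "deltas A q (u @ v) = (\<Union>p\<in>deltas A q u. deltas A p v)"
  by (induction u arbitrary: q) auto

lemma Dl_append: "Dl A X (u @ v) = Dl A (Dl A X u) v"
  unfolding Dl_def by (auto simp: deltas_append)

lemma Dl_Nil[simp]: "Dl A X [] = X" unfolding Dl_def by auto

lemma Dl_Cons: "Dl A X (a # w) = Dl A (\<Union>q\<in>X. delta A q a) w"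
  unfolding Dl_def by auto

lemma lang_iff: "w \<in> lang A \<longleftrightarrow> w \<in> lists (alphabet A) \<and> Dl A (init A) w \<inter> final A \<noteq> {}"
  unfolding lang_def Dl_def by auto

lemma Dl_sub: "wf_nfa A \<Longrightarrow> X \<subseteq> states A \<Longrightarrow> w \<in> lists (alphabet A) \<Longrightarrow> Dl A X w \<subseteq> states A"
proof (induction w arbitrary: X)
  case Nil then show ?case by simp
next
  case (Cons a w)
  have "(\<Union>q\<in>X. delta A q a) \<subseteq> states A" using Cons.prems unfolding wf_nfa_def by fastforce
  then show ?case using Cons by (simp add: Dl_Cons)
qed

lemma tower_mem: "tower K L ws \<Longrightarrow> i < length ws \<Longrightarrow> ws ! i \<in> K \<union> L"
proof (induction i)
  case 0 then show ?case by (simp add: tower_def)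
next
  case (Suc i) then show ?case unfolding tower_def by (metis Suc_lessD UnE UnI1 UnI2)
qed

lemma tower_prefix: "tower K L ws \<Longrightarrow> a \<le> b \<Longrightarrow> b < length ws \<Longrightarrow> prefix (ws ! a) (ws ! b)"
proof (induction b)
  case 0 then show ?case by simp
next
  case (Suc b)
  show ?case
  proof (cases "a = Suc b")
    case True then show ?thesis by simp
  next
    case False
    then have "prefix (ws ! a) (ws ! b)" using Suc by auto
    moreover have "prefix (ws ! b) (ws ! Suc b)" using Suc.prems unfolding tower_def by auto
    ultimately show ?thesis by (rule prefix_order.trans)
  qed
qed

lemma no_inf_disj: "\<not> (\<exists>w. infinite_tower K L w) \<Longrightarrow> K \<inter> L = {}"
proof (rule ccontr)
  assume a: "\<not> (\<exists>w. infinite_tower K L w)" "K \<inter> L \<noteq> {}"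
  then obtain v where "v \<in> K" "v \<in> L" by auto
  then have "infinite_tower K L (\<lambda>_. v)" unfolding infinite_tower_def by auto
  then show False using a by blast
qed

lemma pump_state:
  assumes "Dl A X (x @ u) = Dl A X x"
  shows "Dl A X (x @ concat (replicate c u) @ y) = Dl A X (x @ y)"
proof (induction c)
  case 0 then show ?case by simp
next
  case (Suc c)
  have "Dl A X (x @ concat (replicate (Suc c) u) @ y) = Dl A (Dl A X (x @ u)) (concat (replicate c u) @ y)"
    by (simp add: Dl_append[symmetric])
  also have "\<dots> = Dl A X (x @ concat (replicate c u) @ y)" using assms by (simp add: Dl_append)
  finally show ?case using Suc by simp
qed

lemma prefix_drop_mono: "prefix a b \<Longrightarrow> prefix (drop n a) (drop n b)"
  by (auto simp: prefix_def)

lemma prefix_split: "prefix a b \<Longrightarrow> b = a @ drop (length a) b"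
  by (auto simp: prefix_def)



lemma mem_eq:
  assumes "x \<in> lists (alphabet A)" "y \<in> lists (alphabet A)" "Dl A (init A) x = Dl A (init A) y"
  shows "x \<in> lang A \<longleftrightarrow> y \<in> lang A"
  using assms by (simp add: lang_iff)

lemma pump:
  fixes A :: "('q,'a) nfa" and B :: "('p,'a) nfa"
  assumes tw: "tower (lang A) (lang B) ws" and alph: "alphabet A = alphabet B"
    and ij: "i < j" "j < length ws"
    and eqA: "Dl A (init A) (ws!i) = Dl A (init A) (ws!j)"
    and eqB: "Dl B (init B) (ws!i) = Dl B (init B) (ws!j)"
  shows "\<exists>w. infinite_tower (lang A) (lang B) w"
proof -
  define K where "K = lang A"
  define L where "L = lang B"
  define x where "x = ws ! i"
  define u where "u = drop (length x) (ws ! j)"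
  define p where "p = j - i"
  have p0: "0 < p" using ij by (simp add: p_def)
  have lists_ws: "\<And>k. k < length ws \<Longrightarrow> ws ! k \<in> lists (alphabet A)"
  proof -
    fix k assume "k < length ws"
    then have "ws ! k \<in> lang A \<union> lang B" using tower_mem[OF tw] by blast
    then show "ws ! k \<in> lists (alphabet A)" using alph by (auto simp: lang_def)
  qed
  have pre: "\<And>a b. a \<le> b \<Longrightarrow> b < length ws \<Longrightarrow> prefix (ws ! a) (ws ! b)"
    using tower_prefix[OF tw] by blast
  have step: "\<And>a. Suc a < length ws \<Longrightarrow> prefix (ws!a) (ws!Suc a) \<and>
        (ws!a \<in> K \<longrightarrow> ws!Suc a \<in> L) \<and> (ws!a \<in> L \<longrightarrow> ws!Suc a \<in> K)"
    using tw unfolding tower_def K_def L_def by blast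
  have wsj: "ws ! j = x @ u" unfolding u_def x_def
    using prefix_split[OF pre[of i j]] ij by simp
  have ulists: "u \<in> lists (alphabet A)" using lists_ws[of j] ij unfolding u_def
    by (auto dest: in_set_dropD)
  define g where "g k = (if k < i then k else i + (k - i) mod p)" for k
  define f where "f k = (if k < i then ws ! k else
      x @ concat (replicate ((k - i) div p) u) @ drop (length x) (ws ! g k))" for k
  have g_lt: "g k < length ws" for k
  proof (cases "k < i")
    case True then show ?thesis using ij by (simp add: g_def)
  next
    case False
    have "(k - i) mod p < p" using p0 by simp
    then have "i + (k - i) mod p < j" using ij unfolding p_def by linarith
    then show ?thesis using False ij by (simp add: g_def)
  qed
  have g_ge: "\<not> k < i \<Longrightarrow> i \<le> g k \<and> g k < j" for k
  proof -
    assume "\<not> k < i"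
    have "(k - i) mod p < p" using p0 by simp
    then have "i + (k - i) mod p < j" using ij unfolding p_def by linarith
    then show "i \<le> g k \<and> g k < j" using \<open>\<not> k < i\<close> by (simp add: g_def)
  qed
  have fstateA: "Dl A (init A) (f k) = Dl A (init A) (ws ! g k)" for k
  proof (cases "k < i")
    case True then show ?thesis by (simp add: f_def g_def)
  next
    case False
    have "Dl A (init A) (x @ u) = Dl A (init A) x" using eqA wsj x_def by simp
    then have "Dl A (init A) (f k) = Dl A (init A) (x @ drop (length x) (ws ! g k))"
      using False by (simp add: f_def pump_state)
    also have "x @ drop (length x) (ws ! g k) = ws ! g k"
      using prefix_split[OF pre[of i "g k"]] g_ge[OF False] g_lt[of k] x_def by simp
    finally show ?thesis .
  qed
  have fstateB: "Dl B (init B) (f k) = Dl B (init B) (ws ! g k)" for k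
  proof (cases "k < i")
    case True then show ?thesis by (simp add: f_def g_def)
  next
    case False
    have "Dl B (init B) (x @ u) = Dl B (init B) x" using eqB wsj x_def by simp
    then have "Dl B (init B) (f k) = Dl B (init B) (x @ drop (length x) (ws ! g k))"
      using False by (simp add: f_def pump_state)
    also have "x @ drop (length x) (ws ! g k) = ws ! g k"
      using prefix_split[OF pre[of i "g k"]] g_ge[OF False] g_lt[of k] x_def by simp
    finally show ?thesis .
  qed
  have flists: "f k \<in> lists (alphabet A)" for k
  proof (cases "k < i")
    case True then show ?thesis using lists_ws ij by (simp add: f_def)
  next
    case False
    have "x \<in> lists (alphabet A)" using lists_ws ij x_def by simp
    moreover have "drop (length x) (ws ! g k) \<in> lists (alphabet A)"
      using lists_ws[OF g_lt[of k]] by (auto dest: in_set_dropD)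
    ultimately show ?thesis using False ulists by (auto simp: f_def)
  qed
  have memK: "f k \<in> K \<longleftrightarrow> ws ! g k \<in> K" for k
    unfolding K_def using mem_eq[OF flists lists_ws[OF g_lt] fstateA] .
  have memL: "f k \<in> L \<longleftrightarrow> ws ! g k \<in> L" for k
    unfolding L_def using mem_eq[of "f k" B "ws ! g k"] flists lists_ws[OF g_lt] fstateB alph by simp
  have memIJ: "ws ! j \<in> K \<longleftrightarrow> ws ! i \<in> K" "ws ! j \<in> L \<longleftrightarrow> ws ! i \<in> L"
    unfolding K_def L_def using mem_eq[of "ws ! j" A "ws!i"] mem_eq[of "ws ! j" B "ws!i"]
      lists_ws ij eqA eqB alph by auto
  have flow: "k < j \<Longrightarrow> f k = ws ! k \<and> g k = k" for k
  proof -
    assume "k < j"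
    show ?thesis
    proof (cases "k < i")
      case True then show ?thesis by (simp add: f_def g_def)
    next
      case False
      then have km: "(k - i) mod p = k - i" "(k - i) div p = 0" using \<open>k < j\<close> by (auto simp: p_def)
      then have gk: "g k = k" using False by (simp add: g_def)
      have "f k = x @ drop (length x) (ws ! k)" using False km gk by (simp add: f_def)
      also have "\<dots> = ws ! k" using prefix_split[OF pre[of i k]] False \<open>k < j\<close> ij x_def by simp
      finally show ?thesis using gk by simp
    qed
  qed
  have "infinite_tower K L f"
    unfolding infinite_tower_def
  proof (rule conjI)
    have "f 0 = ws ! 0" using flow ij by simp
    then show "f 0 \<in> K \<union> L" using tower_mem[OF tw, of 0] ij unfolding K_def L_def by force
  next
    show "\<forall>k. prefix (f k) (f (Suc k)) \<and> (f k \<in> K \<longrightarrow> f (Suc k) \<in> L) \<and> (f k \<in> L \<longrightarrow> f (Suc k) \<in> K)"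
    proof
    fix k
    show "prefix (f k) (f (Suc k)) \<and> (f k \<in> K \<longrightarrow> f (Suc k) \<in> L) \<and> (f k \<in> L \<longrightarrow> f (Suc k) \<in> K)"
    proof (cases "Suc k < j")
      case True
      then have "f k = ws ! k" "f (Suc k) = ws ! Suc k" using flow by auto
      then show ?thesis using step[of k] True ij by simp
    next
      case False
      then have ki: "\<not> k < i" using ij by simp
      define r where "r = (k - i) mod p"
      define c where "c = (k - i) div p"
      have sk: "Suc k - i = Suc (k - i)" using ki by simp
      have rp: "r < p" using p0 by (simp add: r_def)
      show ?thesis
      proof (cases "Suc r = p")
        case False
        have d: "(Suc k - i) div p = c" "(Suc k - i) mod p = Suc r"
          using False sk by (simp_all add: div_Suc mod_Suc r_def c_def)
        have gk: "g k = i + r" "g (Suc k) = Suc (i + r)" using ki d by (simp_all add: g_def r_def)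
        have lt: "Suc (g k) < length ws" using gk rp False ij by (simp add: p_def)
        have fk: "f k = x @ concat (replicate c u) @ drop (length x) (ws ! g k)"
          using ki by (simp add: f_def c_def)
        have fsk: "f (Suc k) = x @ concat (replicate c u) @ drop (length x) (ws ! Suc (g k))"
          using ki d gk by (simp add: f_def)
        have "prefix (f k) (f (Suc k))" unfolding fk fsk
          using prefix_drop_mono[OF conjunct1[OF step[OF lt]]] by simp
        then show ?thesis using step[OF lt] memK memL gk by simp
      next
        case True
        have d: "(Suc k - i) div p = Suc c" "(Suc k - i) mod p = 0"
          using True sk by (simp_all add: div_Suc mod_Suc r_def c_def)
        have "i + r = j - 1" using True ij unfolding p_def by linarith
        then have gk: "g k = j - 1" "g (Suc k) = i" using ki d
          by (simp_all add: g_def r_def)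
        have lt: "Suc (j - 1) < length ws" "Suc (j - 1) = j" using ij by auto
        have fk: "f k = x @ concat (replicate c u) @ drop (length x) (ws ! (j - 1))"
          using ki gk by (simp add: f_def c_def)
        have "concat (replicate (Suc c) u) = concat (replicate c u) @ u"
          by (metis concat.simps(2) concat_append concat.simps(1) append_Nil2 replicate_append_same replicate_Suc)
        then have fsk: "f (Suc k) = x @ concat (replicate c u) @ u"
          using ki d gk by (simp add: f_def x_def)
        have "prefix (drop (length x) (ws ! (j - 1))) u"
          unfolding u_def using prefix_drop_mono[OF conjunct1[OF step[OF lt(1)]]] lt(2) by simp
        then have "prefix (f k) (f (Suc k))" unfolding fk fsk by simp
        moreover have "(ws ! (j-1) \<in> K \<longrightarrow> ws ! j \<in> L) \<and> (ws ! (j-1) \<in> L \<longrightarrow> ws ! j \<in> K)"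
          using step[OF lt(1)] lt(2) by simp
        ultimately show ?thesis using memK memL gk memIJ by simp
      qed
    qed
    qed
  qed
  then show ?thesis unfolding K_def L_def by blast
qed



definition tog :: "'x \<Rightarrow> 'x set \<Rightarrow> 'x set" where
  "tog z X = (if z \<in> X then X - {z} else insert z X)"

lemma tog_tog[simp]: "tog z (tog z X) = X" unfolding tog_def by auto

lemma count_good:
  assumes fin: "finite QA" "finite QB" and q: "qa \<in> FA" "qb \<in> FB" "FA \<subseteq> QA" "FB \<subseteq> QB"
  shows "card {(S,T). S \<subseteq> QA \<and> T \<subseteq> QB \<and> ((S \<inter> FA \<noteq> {}) \<noteq> (T \<inter> FB \<noteq> {}))} * 2
           \<le> 2 ^ (card QA + card QB)"
proof -
  define G where "G = {(S,T). S \<subseteq> QA \<and> T \<subseteq> QB \<and> ((S \<inter> FA \<noteq> {}) \<noteq> (T \<inter> FB \<noteq> {}))}"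
  define U where "U = Pow QA \<times> Pow QB"
  define psi where "psi = (\<lambda>(S,T). if T \<inter> (FB - {qb}) = {} then (S, tog qb T) else (tog qa S, T))"
  have inv: "psi (psi z) = z" for z
  proof -
    obtain S T where z: "z = (S,T)" by fastforce
    show ?thesis
    proof (cases "T \<inter> (FB - {qb}) = {}")
      case True
      then have "tog qb T \<inter> (FB - {qb}) = {}" unfolding tog_def by auto
      then show ?thesis using True z by (simp add: psi_def)
    next
      case False then show ?thesis using z by (simp add: psi_def)
    qed
  qed
  have inj: "inj_on psi G" by (metis inj_onI inv)
  have GU: "G \<subseteq> U" unfolding G_def U_def by auto
  have img: "psi ` G \<subseteq> U - G"
  proof
    fix y assume "y \<in> psi ` G"
    then obtain S T where st: "(S,T) \<in> G" "y = psi (S,T)" by auto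
    show "y \<in> U - G"
    proof (cases "T \<inter> (FB - {qb}) = {}")
      case True
      then have y: "y = (S, tog qb T)" using st by (simp add: psi_def)
      have "(T \<inter> FB \<noteq> {}) \<longleftrightarrow> qb \<in> T" using True q by auto
      moreover have "(tog qb T \<inter> FB \<noteq> {}) \<longleftrightarrow> qb \<notin> T" using True q unfolding tog_def by auto
      ultimately show ?thesis using st(1) y q unfolding G_def U_def tog_def by auto
    next
      case False
      then have y: "y = (tog qa S, T)" using st by (simp add: psi_def)
      have tf: "T \<inter> FB \<noteq> {}" using False by auto
      then have "S \<inter> FA = {}" using st(1) unfolding G_def by auto
      then have "qa \<notin> S" using q by auto
      then have "tog qa S = insert qa S" unfolding tog_def by auto
      then show ?thesis using st(1) y q tf unfolding G_def U_def by auto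
    qed
  qed
  have finU: "finite U" using fin unfolding U_def by simp
  have "card (G \<union> psi ` G) = card G + card (psi ` G)"
    by (rule card_Un_disjoint) (use finU GU img in \<open>auto intro: finite_subset\<close>)
  also have "card (psi ` G) = card G" using card_image[OF inj] .
  finally have "card G * 2 = card (G \<union> psi ` G)" by simp
  also have "\<dots> \<le> card U" using GU img finU by (intro card_mono) auto
  also have "card U = 2 ^ (card QA + card QB)" unfolding U_def
    using fin by (simp add: card_cartesian_product card_Pow power_add)
  finally show ?thesis unfolding G_def .
qed



lemma upper:
  fixes A :: "('q,'a) nfa" and B :: "('p,'a) nfa"
  assumes wA: "wf_nfa A" and wB: "wf_nfa B" and alph: "alphabet A = alphabet B"
    and cm: "card (states A) \<le> m" and cn: "card (states B) \<le> n"
    and ni: "\<not> (\<exists>w. infinite_tower (lang A) (lang B) w)"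
    and tw: "tower (lang A) (lang B) ws"
  shows "length ws \<le> 2 ^ (m + n - 1)"
proof (cases "length ws \<le> 1")
  case True then show ?thesis by (meson le_trans one_le_power one_le_numeral)
next
  case False
  have disj: "lang A \<inter> lang B = {}" using no_inf_disj[OF ni] .
  have s0: "prefix (ws!0) (ws!Suc 0) \<and> (ws!0 \<in> lang A \<longrightarrow> ws!Suc 0 \<in> lang B) \<and>
      (ws!0 \<in> lang B \<longrightarrow> ws!Suc 0 \<in> lang A)" using tw False unfolding tower_def by auto
  have m0: "ws ! 0 \<in> lang A \<union> lang B" using tw unfolding tower_def by auto
  have "\<exists>v. v \<in> lang A" using s0 m0 by blast
  then obtain qa where qa: "qa \<in> final A" by (auto simp: lang_iff)
  have "\<exists>v. v \<in> lang B" using s0 m0 by blast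
  then obtain qb where qb: "qb \<in> final B" by (auto simp: lang_iff)
  define P where "P k = (Dl A (init A) (ws!k), Dl B (init B) (ws!k))" for k
  define G where "G = {(S,T). S \<subseteq> states A \<and> T \<subseteq> states B \<and>
      ((S \<inter> final A \<noteq> {}) \<noteq> (T \<inter> final B \<noteq> {}))}"
  have lists_ws: "\<And>k. k < length ws \<Longrightarrow> ws ! k \<in> lists (alphabet A)"
  proof -
    fix k assume "k < length ws"
    then have "ws ! k \<in> lang A \<union> lang B" using tower_mem[OF tw] by blast
    then show "ws ! k \<in> lists (alphabet A)" using alph by (auto simp: lang_def)
  qed
  have inj: "inj_on P {..<length ws}"
  proof (rule inj_onI, rule ccontr)
    fix a b assume ab: "a \<in> {..<length ws}" "b \<in> {..<length ws}" "P a = P b" "a \<noteq> b"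
    show False
    proof (cases "a < b")
      case True
      then show False using pump[OF tw alph True] ab ni by (auto simp: P_def)
    next
      case False
      then have "b < a" using ab by simp
      then show False using pump[OF tw alph \<open>b < a\<close>] ab ni by (auto simp: P_def)
    qed
  qed
  have sub: "P ` {..<length ws} \<subseteq> G"
  proof
    fix y assume "y \<in> P ` {..<length ws}"
    then obtain k where k: "k < length ws" "y = P k" by auto
    have l: "ws ! k \<in> lists (alphabet A)" "ws ! k \<in> lists (alphabet B)" using lists_ws k alph by auto
    have mem: "ws ! k \<in> lang A \<union> lang B" using tower_mem[OF tw k(1)] .
    have "Dl A (init A) (ws!k) \<subseteq> states A" using Dl_sub[OF wA _ l(1)] wA unfolding wf_nfa_def by blast
    moreover have "Dl B (init B) (ws!k) \<subseteq> states B" using Dl_sub[OF wB _ l(2)] wB unfolding wf_nfa_def by blast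
    moreover have "(Dl A (init A) (ws!k) \<inter> final A \<noteq> {}) \<noteq> (Dl B (init B) (ws!k) \<inter> final B \<noteq> {})"
    proof -
      have e1: "ws!k \<in> lang A \<longleftrightarrow> Dl A (init A) (ws!k) \<inter> final A \<noteq> {}" using l by (simp add: lang_iff)
      have e2: "ws!k \<in> lang B \<longleftrightarrow> Dl B (init B) (ws!k) \<inter> final B \<noteq> {}" using l by (simp add: lang_iff)
      have "\<not> (ws!k \<in> lang A \<and> ws!k \<in> lang B)" using disj by blast
      then show ?thesis using mem e1 e2 by blast
    qed
    ultimately show "y \<in> G" using k unfolding P_def G_def by auto
  qed
  have finA: "finite (states A)" and finB: "finite (states B)" using wA wB by (auto simp: wf_nfa_def)
  have qs: "final A \<subseteq> states A" "final B \<subseteq> states B" using wA wB by (auto simp: wf_nfa_def)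
  have cG: "card G * 2 \<le> 2 ^ (card (states A) + card (states B))"
    unfolding G_def by (rule count_good[OF finA finB qa qb qs])
  have "card (states A) \<ge> 1" using qa qs finA by (metis Suc_leI One_nat_def card_gt_0_iff empty_iff subsetD)
  then obtain t where t: "card (states A) + card (states B) = Suc t"
    by (metis add_Suc le_iff_add plus_1_eq_Suc)
  then have "(2::nat) ^ (card (states A) + card (states B)) = 2 ^ (card (states A) + card (states B) - 1) * 2"
    by simp
  then have cG': "card G \<le> 2 ^ (card (states A) + card (states B) - 1)" using cG by simp
  have finG: "finite G"
    by (rule finite_subset[of _ "Pow (states A) \<times> Pow (states B)"]) (use finA finB in \<open>auto simp: G_def\<close>)
  have "length ws = card (P ` {..<length ws})" using card_image[OF inj] by simp
  also have "\<dots> \<le> card G" using sub finG by (rule card_mono[rotated])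
  also have "\<dots> \<le> 2 ^ (card (states A) + card (states B) - 1)" using cG' .
  also have "\<dots> \<le> 2 ^ (m + n - 1)" using cm cn by (intro power_increasing) auto
  finally show ?thesis .
qed



definition Ac :: "nat \<Rightarrow> (nat,nat) nfa" where
  "Ac m = \<lparr>states = {0..<m}, alphabet = {0..<m}, init = {0..<m}, final = {0},
     delta = (\<lambda>q a. if q = a then {0..<a} else {q})\<rparr>"

definition Bc :: "nat \<Rightarrow> (nat,nat) nfa" where
  "Bc m = \<lparr>states = {0,1}, alphabet = {0..<m}, init = {0}, final = {1},
     delta = (\<lambda>q a. if a = 0 then {1} else {0})\<rparr>"

fun Dw :: "nat \<Rightarrow> nat list" where
  "Dw 0 = []"
| "Dw (Suc j) = Dw j @ [j] @ Dw j"

lemma odd_pow_m1: "j \<noteq> 0 \<Longrightarrow> odd (2^j - 1::nat)"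
  by (cases j) (simp_all add: odd_pos)

lemma len_Dw: "length (Dw j) = 2 ^ j - 1"
proof (induction j)
  case 0 then show ?case by simp
next
  case (Suc j)
  have "(1::nat) \<le> 2 ^ j" by simp
  then show ?case using Suc by simp
qed

lemma set_Dw: "set (Dw j) \<subseteq> {0..<j}"
  by (induction j) auto

lemma Dw_even: "k < length (Dw j) \<Longrightarrow> even k \<Longrightarrow> Dw j ! k = 0"
proof (induction j arbitrary: k)
  case 0 then show ?case by simp
next
  case (Suc j)
  have l: "length (Dw j) = 2 ^ j - 1" by (rule len_Dw)
  show ?case
  proof (cases "k < length (Dw j)")
    case True then show ?thesis using Suc by (simp add: nth_append)
  next
    case False
    show ?thesis
    proof (cases "k = length (Dw j)")
      case True
      then have "j = 0" using Suc.prems l odd_pow_m1 by metis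
      then show ?thesis using True by simp
    next
      case False2: False
      then have "j \<noteq> 0" using False Suc.prems by (cases j) auto
      then have ej: "even (2 ^ j :: nat)" by simp
      have "k - Suc (length (Dw j)) < length (Dw j)" using Suc.prems False False2 by simp
      moreover have "even (k - Suc (length (Dw j)))" using Suc.prems(2) ej l \<open>j \<noteq> 0\<close>
        by (simp add: Suc_diff_le)
      ultimately have "Dw j ! (k - Suc (length (Dw j))) = 0" using Suc.IH by blast
      then show ?thesis using False False2 by (simp add: nth_append)
    qed
  qed
qed

lemma Bc_deltas: "deltas (Bc m) q w = (if w = [] then {q} else if last w = 0 then {1} else {0})"
proof (induction w arbitrary: q)
  case Nil then show ?case by simp
next
  case (Cons a w) then show ?case by (auto simp: Bc_def)
qed

lemma Ac_step: "(\<Union>q\<in>X. delta (Ac m) q a) = (if a \<in> X then (X - {a}) \<union> {0..<a} else X)"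
  by (auto simp: Ac_def split: if_splits)

lemma Ac_Cons: "Dl (Ac m) X (a # w) = Dl (Ac m) (if a \<in> X then (X - {a}) \<union> {0..<a} else X) w"
  by (simp add: Dl_Cons Ac_step)

lemma Ac_Dw: "X \<subseteq> {j..} \<Longrightarrow> Dl (Ac m) (X \<union> {0..<j}) (Dw j) = X"
proof (induction j arbitrary: X)
  case 0 then show ?case by simp
next
  case (Suc j)
  have e: "X \<union> {0..<Suc j} = (insert j X) \<union> {0..<j}" by auto
  have "Dl (Ac m) (X \<union> {0..<Suc j}) (Dw (Suc j)) =
        Dl (Ac m) (Dl (Ac m) (insert j X \<union> {0..<j}) (Dw j)) (j # Dw j)"
    by (simp add: e Dl_append)
  also have "Dl (Ac m) (insert j X \<union> {0..<j}) (Dw j) = insert j X"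
  proof -
    have "insert j X \<subseteq> {j..}" using Suc.prems by auto
    then show ?thesis by (rule Suc.IH)
  qed
  also have "Dl (Ac m) (insert j X) (j # Dw j) = Dl (Ac m) (X \<union> {0..<j}) (Dw j)"
  proof -
    have "j \<notin> X" using Suc.prems by auto
    then have "(insert j X - {j}) \<union> {0..<j} = X \<union> {0..<j}" by auto
    then show ?thesis by (simp add: Ac_Cons)
  qed
  also have "\<dots> = X" using Suc.prems by (intro Suc.IH) auto
  finally show ?case .
qed

lemma Ac_even: "X \<subseteq> {Suc j..} \<Longrightarrow> prefix p (Dw (Suc j)) \<Longrightarrow> even (length p)
   \<Longrightarrow> 0 \<in> Dl (Ac m) (X \<union> {0..<Suc j}) p"
proof (induction j arbitrary: X p)
  case 0
  then have "p = []" by (auto simp: prefix_Cons)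
  then show ?case by simp
next
  case (Suc j)
  have e: "X \<union> {0..<Suc (Suc j)} = (insert (Suc j) X) \<union> {0..<Suc j}" by auto
  have "prefix p (Dw (Suc j)) \<or> (\<exists>us. p = Dw (Suc j) @ us \<and> prefix us ([Suc j] @ Dw (Suc j)))"
    using Suc.prems(2) by (simp only: Dw.simps(2)[of "Suc j"] prefix_append)
  then show ?case
  proof
    assume "prefix p (Dw (Suc j))"
    moreover have "insert (Suc j) X \<subseteq> {Suc j..}" using Suc.prems by auto
    ultimately have "0 \<in> Dl (Ac m) (insert (Suc j) X \<union> {0..<Suc j}) p"
      using Suc.IH Suc.prems(3) by blast
    then show ?thesis by (simp only: e)
  next
    assume "\<exists>us. p = Dw (Suc j) @ us \<and> prefix us ([Suc j] @ Dw (Suc j))"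
    then obtain us where us: "p = Dw (Suc j) @ us" "prefix us (Suc j # Dw (Suc j))" by auto
    have lD: "length (Dw (Suc j)) = 2 ^ Suc j - 1" by (rule len_Dw)
    have ev2: "even (2 ^ Suc j :: nat)" by simp
    have pos: "(1::nat) \<le> 2 ^ Suc j" by simp
    show ?thesis
    proof (cases us)
      case Nil
      then have "length p = 2 ^ Suc j - 1" using us lD by simp
      then show ?thesis using Suc.prems(3) odd_pow_m1[of "Suc j"] by simp
    next
      case (Cons b p')
      then have b: "b = Suc j" "prefix p' (Dw (Suc j))" using us(2) by auto
      have "length p = (2 ^ Suc j - 1) + 1 + length p'" using us(1) Cons lD by simp
      also have "(2 ^ Suc j - 1) + 1 = (2::nat) ^ Suc j" using pos by simp
      finally have "even (length p')" using Suc.prems(3) ev2 by simp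
      have "Dl (Ac m) (X \<union> {0..<Suc (Suc j)}) p =
            Dl (Ac m) (Dl (Ac m) (insert (Suc j) X \<union> {0..<Suc j}) (Dw (Suc j))) (Suc j # p')"
        unfolding e us(1) Cons b(1) Dl_append by (rule refl)
      also have "Dl (Ac m) (insert (Suc j) X \<union> {0..<Suc j}) (Dw (Suc j)) = insert (Suc j) X"
        by (rule Ac_Dw) (use Suc.prems(1) in auto)
      also have "Dl (Ac m) (insert (Suc j) X) (Suc j # p') = Dl (Ac m) (X \<union> {0..<Suc j}) p'"
      proof -
        have "Suc j \<notin> X" using Suc.prems by auto
        then have "(insert (Suc j) X - {Suc j}) \<union> {0..<Suc j} = X \<union> {0..<Suc j}" by auto
        then show ?thesis by (simp add: Ac_Cons)
      qed
      moreover have "X \<subseteq> {Suc j..}" using Suc.prems(1) by auto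
      ultimately show ?thesis using Suc.IH[of X p'] b(2) \<open>even (length p')\<close> by simp
    qed
  qed
qed



definition Phi :: "nat set \<Rightarrow> nat" where "Phi X = (\<Sum>q\<in>X. 2 ^ q)"

lemma sum_pow2: "(\<Sum>q\<in>{0..<a}. (2::nat) ^ q) = 2 ^ a - 1"
proof (induction a)
  case 0 then show ?case by simp
next
  case (Suc a)
  have "(1::nat) \<le> 2 ^ a" by simp
  then show ?case using Suc by simp
qed

lemma step_dec:
  assumes "finite X" "a \<in> X" shows "Phi ((X - {a}) \<union> {0..<a}) < Phi X"
proof -
  have "Phi ((X - {a}) \<union> {0..<a}) \<le> Phi (X - {a}) + Phi {0..<a}"
    unfolding Phi_def using assms(1) by (simp add: sum_Un_nat)
  also have "Phi {0..<a} = 2 ^ a - 1" unfolding Phi_def by (rule sum_pow2)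
  also have "Phi X = 2 ^ a + Phi (X - {a})" unfolding Phi_def using assms by (simp add: sum.remove)
  moreover have "(1::nat) \<le> 2 ^ a" by simp
  ultimately show ?thesis by linarith
qed

lemma fin_Dl: "finite X \<Longrightarrow> finite (Dl (Ac m) X w)"
  by (induction w arbitrary: X) (auto simp: Ac_Cons)

lemma multi: "finite X \<Longrightarrow> Dl (Ac m) X w = X \<or> Phi (Dl (Ac m) X w) < Phi X"
proof (induction w arbitrary: X)
  case Nil then show ?case by simp
next
  case (Cons a w)
  show ?case
  proof (cases "a \<in> X")
    case False then show ?thesis using Cons by (simp add: Ac_Cons)
  next
    case True
    define Y where "Y = (X - {a}) \<union> {0..<a}"
    have fy: "finite Y" using Cons.prems by (simp add: Y_def)
    have "Phi Y < Phi X" unfolding Y_def using step_dec Cons.prems True by blast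
    moreover have "Dl (Ac m) X (a # w) = Dl (Ac m) Y w" using True by (simp add: Ac_Cons Y_def)
    ultimately show ?thesis using Cons.IH[OF fy] by auto
  qed
qed

lemma disjAB: "w \<in> lang (Bc m) \<Longrightarrow> w \<notin> lang (Ac m)"
proof
  assume b: "w \<in> lang (Bc m)" and a: "w \<in> lang (Ac m)"
  from b have "deltas (Bc m) 0 w \<inter> {1} \<noteq> {}" by (auto simp: lang_def Bc_def)
  then have w: "w \<noteq> []" "last w = 0" by (auto simp: Bc_deltas split: if_splits)
  then have ww: "w = butlast w @ [0]" by (metis append_butlast_last_id)
  define Y where "Y = Dl (Ac m) (init (Ac m)) (butlast w)"
  have "Dl (Ac m) (init (Ac m)) w = Dl (Ac m) Y [0]"
    unfolding Y_def by (subst ww) (simp only: Dl_append)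
  also have "\<dots> = (if 0 \<in> Y then Y - {0} else Y)" by (simp add: Ac_Cons)
  finally have "0 \<notin> Dl (Ac m) (init (Ac m)) w" by auto
  then show False using a by (auto simp: lang_iff Ac_def)
qed

lemma no_inf: "\<not> (\<exists>f. infinite_tower (lang (Ac m)) (lang (Bc m)) f)"
proof
  assume "\<exists>f. infinite_tower (lang (Ac m)) (lang (Bc m)) f"
  then obtain f where f: "infinite_tower (lang (Ac m)) (lang (Bc m)) f" by blast
  define K where "K = lang (Ac m)"
  define L where "L = lang (Bc m)"
  have st: "\<And>k. prefix (f k) (f (Suc k)) \<and> (f k \<in> K \<longrightarrow> f (Suc k) \<in> L) \<and> (f k \<in> L \<longrightarrow> f (Suc k) \<in> K)"
    using f unfolding infinite_tower_def K_def L_def by blast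
  have mem: "f k \<in> K \<union> L" for k
  proof (induction k)
    case 0 then show ?case using f unfolding infinite_tower_def K_def L_def by blast
  next
    case (Suc k) then show ?case using st[of k] by blast
  qed
  have aa: "alphabet (Ac m) = {0..<m}" "alphabet (Bc m) = {0..<m}" by (simp_all add: Ac_def Bc_def)
  have lists: "f k \<in> lists {0..<m}" for k
    using mem[of k] unfolding K_def L_def by (auto simp: lang_iff aa)
  define S where "S k = Dl (Ac m) (init (Ac m)) (f k)" for k
  have finS: "finite (S k)" for k unfolding S_def by (rule fin_Dl) (simp add: Ac_def)
  have memK: "f k \<in> K \<longleftrightarrow> 0 \<in> S k" for k
    using lists[of k] unfolding K_def S_def by (auto simp: lang_iff Ac_def)
  have dec: "Phi (S (Suc k)) < Phi (S k)" for k
  proof -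
    obtain v where v: "f (Suc k) = f k @ v" using st[of k] by (auto simp: prefix_def)
    have e: "S (Suc k) = Dl (Ac m) (S k) v" unfolding S_def v by (simp add: Dl_append)
    have "S (Suc k) \<noteq> S k"
    proof
      assume "S (Suc k) = S k"
      then have "f k \<in> K \<longleftrightarrow> f (Suc k) \<in> K" using memK by simp
      moreover have "K \<inter> L = {}" unfolding K_def L_def using disjAB by blast
      ultimately show False using st[of k] mem[of k] by blast
    qed
    then show ?thesis using multi[OF finS[of k], where w=v] e by auto
  qed
  have "Phi (S k) + k \<le> Phi (S 0)" for k
  proof (induction k)
    case 0 then show ?case by simp
  next
    case (Suc k) then show ?case using dec[of k] by simp
  qed
  from this[of "Suc (Phi (S 0))"] show False by simp
qed

lemma wfA: "0 < m \<Longrightarrow> wf_nfa (Ac m)" by (auto simp: wf_nfa_def Ac_def)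
lemma wfB: "wf_nfa (Bc m)" by (auto simp: wf_nfa_def Bc_def)

lemma tower_AB:
  assumes m: "1 \<le> m"
  shows "tower (lang (Ac m)) (lang (Bc m)) (map (\<lambda>k. take k (Dw m)) [0..<2^m])"
proof -
  define ws where "ws = map (\<lambda>k. take k (Dw m)) [0..<2^m]"
  define K where "K = lang (Ac m)"
  define L where "L = lang (Bc m)"
  have len: "length (Dw m) = 2 ^ m - 1" by (rule len_Dw)
  have nth: "k < 2^m \<Longrightarrow> ws ! k = take k (Dw m)" for k by (simp add: ws_def)
  have lst: "take k (Dw m) \<in> lists {0..<m}" for k
    using set_Dw[of m] by (auto dest: in_set_takeD)
  obtain j where j: "m = Suc j" using m by (cases m) auto
  have ev: "even k \<Longrightarrow> k < 2^m \<Longrightarrow> take k (Dw m) \<in> K" for k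
  proof -
    assume k: "even k" "k < 2^m"
    have lk: "length (take k (Dw m)) = k" using k len by simp
    have pe: "prefix (take k (Dw m)) (Dw (Suc j))" by (simp only: j[symmetric] take_is_prefix)
    have le: "even (length (take k (Dw m)))" using lk k by simp
    have "0 \<in> Dl (Ac m) ({} \<union> {0..<Suc j}) (take k (Dw m))" by (rule Ac_even[OF _ pe le]) simp
    then show ?thesis unfolding K_def using lst[of k] j by (auto simp: lang_iff Ac_def)
  qed
  have od: "odd k \<Longrightarrow> k < 2^m \<Longrightarrow> take k (Dw m) \<in> L" for k
  proof -
    assume k: "odd k" "k < 2^m"
    then have k1: "k - 1 < length (Dw m)" "even (k - 1)" "0 < k" using len by (auto elim: oddE)
    have ne: "take k (Dw m) \<noteq> []" using k1 by (cases "Dw m") auto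
    have "last (take k (Dw m)) = take k (Dw m) ! (k - 1)" using ne k1 by (simp add: last_conv_nth)
    also have "\<dots> = Dw m ! (k - 1)" using k1 by simp
    also have "\<dots> = 0" using Dw_even k1 by blast
    finally have "deltas (Bc m) 0 (take k (Dw m)) = {1}" using ne by (simp add: Bc_deltas)
    then show ?thesis unfolding L_def using lst[of k] by (auto simp: lang_def Bc_def)
  qed
  have disj: "K \<inter> L = {}" unfolding K_def L_def using disjAB by blast
  have "tower K L ws" unfolding tower_def
  proof (intro conjI allI impI)
    show "ws \<noteq> []" by (simp add: ws_def)
    show "ws ! 0 \<in> K \<union> L" using ev[of 0] nth[of 0] by simp
  next
    fix i assume i: "Suc i < length ws"
    then have i2: "Suc i < 2 ^ m" by (simp add: ws_def)
    have "take i (Dw m) = take i (take (Suc i) (Dw m))" by (simp add: min_def)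
    moreover have "ws ! i = take i (Dw m)" "ws ! Suc i = take (Suc i) (Dw m)" using nth i2 by auto
    ultimately show "prefix (ws ! i) (ws ! Suc i)" using take_is_prefix[of i "take (Suc i) (Dw m)"] by simp
  next
    fix i assume i: "Suc i < length ws" and a: "ws ! i \<in> K"
    then have i2: "Suc i < 2 ^ m" by (simp add: ws_def)
    have "even i"
    proof (rule ccontr)
      assume "odd i"
      then have "ws ! i \<in> L" using od[of i] nth[of i] i2 by simp
      then show False using a disj by blast
    qed
    then show "ws ! Suc i \<in> L" using od[of "Suc i"] nth[of "Suc i"] i2 by simp
  next
    fix i assume i: "Suc i < length ws" and a: "ws ! i \<in> L"
    then have i2: "Suc i < 2 ^ m" by (simp add: ws_def)
    have "odd i"
    proof (rule ccontr)
      assume "\<not> odd i"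
      then have "ws ! i \<in> K" using ev[of i] nth[of i] i2 by simp
      then show False using a disj by blast
    qed
    then show "ws ! Suc i \<in> K" using ev[of "Suc i"] nth[of "Suc i"] i2 by simp
  qed
  then show ?thesis unfolding ws_def K_def L_def .
qed



theorem corollary16:
  shows "(\<forall>(A :: ('q, 'a) nfa) (B :: ('p, 'a) nfa) m n ws.
            wf_nfa A \<and> wf_nfa B \<and> alphabet A = alphabet B \<and> card (states A) \<le> m \<and> card (states B) \<le> n \<and>
            \<not> (\<exists>w. infinite_tower (lang A) (lang B) w) \<and>
            tower (lang A) (lang B) ws
            \<longrightarrow> length ws \<le> 2 ^ (m + n - 1))
       \<and> infinite {(m, n). \<exists>(A :: (nat, nat) nfa) (B :: (nat, nat) nfa) ws.
            wf_nfa A \<and> wf_nfa B \<and> alphabet A = alphabet B \<and>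
            card (states A) = m \<and> card (states B) = n \<and>
            \<not> (\<exists>w. infinite_tower (lang A) (lang B) w) \<and>
            tower (lang A) (lang B) ws \<and> length ws \<ge> 2 ^ (m + n - 2)}"
proof (rule conjI)
  show "\<forall>(A :: ('q, 'a) nfa) (B :: ('p, 'a) nfa) m n ws.
            wf_nfa A \<and> wf_nfa B \<and> alphabet A = alphabet B \<and> card (states A) \<le> m \<and> card (states B) \<le> n \<and>
            \<not> (\<exists>w. infinite_tower (lang A) (lang B) w) \<and>
            tower (lang A) (lang B) ws
            \<longrightarrow> length ws \<le> 2 ^ (m + n - 1)"
    using upper by blast
next
  define G where "G = {(m, n). \<exists>(A :: (nat, nat) nfa) (B :: (nat, nat) nfa) ws.
            wf_nfa A \<and> wf_nfa B \<and> alphabet A = alphabet B \<and>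
            card (states A) = m \<and> card (states B) = n \<and>
            \<not> (\<exists>w. infinite_tower (lang A) (lang B) w) \<and>
            tower (lang A) (lang B) ws \<and> length ws \<ge> 2 ^ (m + n - 2)}"
  have sub: "(\<lambda>m. (m, 2::nat)) ` {1::nat..} \<subseteq> G"
  proof
    fix y assume "y \<in> (\<lambda>m. (m, 2::nat)) ` {1::nat..}"
    then obtain m where m: "1 \<le> m" "y = (m, 2)" by auto
    have "wf_nfa (Ac m) \<and> wf_nfa (Bc m) \<and> alphabet (Ac m) = alphabet (Bc m) \<and>
            card (states (Ac m)) = m \<and> card (states (Bc m)) = 2 \<and>
            \<not> (\<exists>w. infinite_tower (lang (Ac m)) (lang (Bc m)) w) \<and>
            tower (lang (Ac m)) (lang (Bc m)) (map (\<lambda>k. take k (Dw m)) [0..<2^m]) \<and>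
            length (map (\<lambda>k. take k (Dw m)) [0..<2^m]) \<ge> 2 ^ (m + 2 - 2)"
      using wfA[of m] wfB[of m] m(1) no_inf[of m] tower_AB[OF m(1)]
      by (simp add: Ac_def Bc_def)
    then show "y \<in> G" unfolding G_def m(2) by blast
  qed
  have "infinite ((\<lambda>m. (m, 2::nat)) ` {1::nat..})"
  proof
    assume "finite ((\<lambda>m. (m, 2::nat)) ` {1::nat..})"
    then have "finite {1::nat..}" by (rule finite_imageD) (auto simp: inj_on_def)
    then show False by (simp add: infinite_Ici)
  qed
  then show "infinite G" using sub infinite_super by blast
qed

end
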